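(* Let $n\ge3$ and let $t\ge0$ be an integer with $r_t=1$. Then $\mathcal{L}_t=\{x_1^{t+1}\partial_n\}$.
   Context: Fix an integer $n\ge 3$. A partition is a sequence $\Lambda=(\lambda_j)_{j\ge1}$ of non-negative integers with finite support; $\mathrm{wt}(\Lambda)=\sum_j j\lambda_j$; $\mathrm{Part}(k)$ is the set of partitions with $\lambda_j=0$ for $j>k$. Write $x^\Lambda=\prod_j x_j^{\lambda_j}$, $\deg(x^\Lambda)=\sum_j\lambda_j$. $\mathcal{B}=\{x^\Lambda\partial_k : 1\le k\le n,\ \Lambda\in\mathrm{Part}(k-1)\}$. For an integer $i\ge-1$, let $r_i\in\{1,\dots,n-1\}$ with $i\equiv r_i\pmod{n-1}$ and $h_i=\lfloor (i-1)/(n-1)\rfloor+1$. Define $\mathrm{WD}(x^\Lambda\partial_k)=\mathrm{wt}(\Lambda)-\deg(x^\Lambda)+n-k$ and $\mathrm{lev}_i(x^\Lambda\partial_k)=h_i\,\mathrm{WD}(x^\Lambda\partial_k)+\deg(x^\Lambda)-1$. For $i\ge-1$, $\mathcal{N}_i=\{b\in\mathcal{B}: \mathrm{lev}_j(b)\le j\text{ for some integer } -1\le j\le i\}$, and $\mathcal{L}_i=\mathcal{N}_i\setminus\mathcal{N}_{i-1}$ for $i\ge0$. *)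

theory Defs
  imports Complex_Main
begin

text \<open>A partition is a finitely supported sequence (lambda_j) for j >= 1, encoded as a
function nat => nat whose value at index 0 is 0 (index 0 is unused).\<close>

definition partition :: "(nat \<Rightarrow> nat) \<Rightarrow> bool" where
  "partition L \<longleftrightarrow> L 0 = 0 \<and> finite {j. L j \<noteq> 0}"

definition Part :: "nat \<Rightarrow> (nat \<Rightarrow> nat) set" where
  "Part k = {L. partition L \<and> (\<forall>j>k. L j = 0)}"

definition wt :: "(nat \<Rightarrow> nat) \<Rightarrow> int" where
  "wt L = (\<Sum>j\<in>{j. L j \<noteq> 0}. int j * int (L j))"

definition pdeg :: "(nat \<Rightarrow> nat) \<Rightarrow> int" where
  "pdeg L = (\<Sum>j\<in>{j. L j \<noteq> 0}. int (L j))"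

text \<open>A basis element x^Lambda d_k is encoded as the pair (Lambda, k).\<close>

definition basis :: "nat \<Rightarrow> ((nat \<Rightarrow> nat) \<times> nat) set" where
  "basis n = {(L, k). 1 \<le> k \<and> k \<le> n \<and> L \<in> Part (k - 1)}"

definition rr :: "nat \<Rightarrow> int \<Rightarrow> int" where
  "rr n i = (i - 1) mod (int n - 1) + 1"

definition hh :: "nat \<Rightarrow> int \<Rightarrow> int" where
  "hh n i = \<lfloor>of_int (i - 1) / (of_int (int n - 1) :: real)\<rfloor> + 1"

definition WD :: "nat \<Rightarrow> (nat \<Rightarrow> nat) \<times> nat \<Rightarrow> int" where
  "WD n b = wt (fst b) - pdeg (fst b) + int n - int (snd b)"

definition lev :: "nat \<Rightarrow> int \<Rightarrow> (nat \<Rightarrow> nat) \<times> nat \<Rightarrow> int" where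
  "lev n i b = hh n i * WD n b + pdeg (fst b) - 1"

definition NN :: "nat \<Rightarrow> int \<Rightarrow> ((nat \<Rightarrow> nat) \<times> nat) set" where
  "NN n i = {b \<in> basis n. \<exists>j::int. -1 \<le> j \<and> j \<le> i \<and> lev n j b \<le> j}"

definition LL :: "nat \<Rightarrow> int \<Rightarrow> ((nat \<Rightarrow> nat) \<times> nat) set" where
  "LL n i = NN n i - NN n (i - 1)"

end

theory Submission
  imports Defs
begin

lemma wt_minus_pdeg:
  "wt L - pdeg L = (\<Sum>j\<in>{j. L j \<noteq> 0}. (int j - 1) * int (L j))"
  unfolding wt_def pdeg_def
  by (simp add: sum_subtractf[symmetric] algebra_simps)

lemma wt_pdeg_nonneg:
  assumes "partition L"
  shows "wt L - pdeg L \<ge> 0"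
proof -
  have "\<And>j. j \<in> {j. L j \<noteq> 0} \<Longrightarrow> (int j - 1) * int (L j) \<ge> 0"
  proof -
    fix j assume "j \<in> {j. L j \<noteq> 0}"
    then have "j \<ge> 1" using assms unfolding partition_def by (cases j) auto
    then show "(int j - 1) * int (L j) \<ge> 0" by simp
  qed
  then show ?thesis unfolding wt_minus_pdeg by (rule sum_nonneg)
qed

lemma pdeg_nonneg: "pdeg L \<ge> 0"
  unfolding pdeg_def by (rule sum_nonneg) simp

lemma wt_eq_pdeg:
  assumes "partition L" and "wt L = pdeg L"
  shows "\<forall>j. j \<noteq> 1 \<longrightarrow> L j = 0"
proof (intro allI impI, rule ccontr)
  fix j assume j1: "j \<noteq> 1" and nz: "L j \<noteq> 0"
  let ?S = "{j. L j \<noteq> 0}"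
  have fin: "finite ?S" using assms unfolding partition_def by auto
  have j0: "j \<noteq> 0" using assms(1) nz unfolding partition_def by (cases j) auto
  have nn: "\<forall>i\<in>?S. (int i - 1) * int (L i) \<ge> 0"
  proof
    fix i assume "i \<in> ?S"
    then have "i \<ge> 1" using assms unfolding partition_def by (cases i) auto
    then show "(int i - 1) * int (L i) \<ge> 0" by simp
  qed
  have "(\<Sum>i\<in>?S. (int i - 1) * int (L i)) = 0" using assms(2) wt_minus_pdeg[of L] by simp
  moreover have "(\<Sum>i\<in>?S. (int i - 1) * int (L i)) = 0 \<longleftrightarrow> (\<forall>i\<in>?S. (int i - 1) * int (L i) = 0)"
    by (rule sum_nonneg_eq_0_iff[OF fin]) (use nn in auto)
  ultimately have "\<forall>i\<in>?S. (int i - 1) * int (L i) = 0" by simp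
  then have "(int j - 1) * int (L j) = 0" using nz by blast
  then show False using j1 j0 nz by simp
qed

lemma pdeg_single:
  assumes "\<forall>j. j \<noteq> 1 \<longrightarrow> L j = 0"
  shows "pdeg L = int (L 1)"
proof (cases "L 1 = 0")
  case True
  have "\<forall>j. L j = 0"
  proof
    fix j show "L j = 0" using assms True by (cases "j = 1") simp_all
  qed
  then have "{j. L j \<noteq> 0} = {}" by simp
  then show ?thesis using True unfolding pdeg_def by simp
next
  case False
  then have "{j. L j \<noteq> 0} = {1}" using assms by auto
  then show ?thesis unfolding pdeg_def by simp
qed

lemma wt_single:
  assumes "\<forall>j. j \<noteq> 1 \<longrightarrow> L j = 0"
  shows "wt L = int (L 1)"
proof (cases "L 1 = 0")
  case True
  have "\<forall>j. L j = 0"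
  proof
    fix j show "L j = 0" using assms True by (cases "j = 1") simp_all
  qed
  then have "{j. L j \<noteq> 0} = {}" by simp
  then show ?thesis using True unfolding wt_def by simp
next
  case False
  then have "{j. L j \<noteq> 0} = {1}" using assms by auto
  then show ?thesis unfolding wt_def by simp
qed

lemma hh_mult:
  assumes "n \<ge> 3" and "q \<ge> 0"
  shows "hh n (q * (int n - 1) + 1) = q + 1"
proof -
  have m: "real_of_int (int n - 1) > 0" using assms by simp
  have "real_of_int (q * (int n - 1) + 1 - 1) / real_of_int (int n - 1) = real_of_int q"
    using m by simp
  then show ?thesis unfolding hh_def by simp
qed

lemma hh_mult0:
  assumes "n \<ge> 3" and "q \<ge> 0"
  shows "hh n (q * (int n - 1)) = q"
proof -
  have m: "real_of_int (int n - 1) > 0" using assms by simp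
  have "real_of_int (q * (int n - 1) - 1) / real_of_int (int n - 1)
        = real_of_int q - 1 / real_of_int (int n - 1)"
    using m by (simp add: field_simps)
  moreover have "1 / real_of_int (int n - 1) \<le> 1" "1 / real_of_int (int n - 1) > 0"
    using m assms by auto
  ultimately have "\<lfloor>real_of_int (q * (int n - 1) - 1) / real_of_int (int n - 1)\<rfloor> = q - 1"
    by (simp add: floor_eq_iff)
  then show ?thesis unfolding hh_def by simp
qed

theorem corollary2p10:
  fixes n :: nat and t :: int
  assumes "n \<ge> 3" and "t \<ge> 0" and "rr n t = 1"
  shows "LL n t = {((\<lambda>j. if j = 1 then nat (t + 1) else 0), n)}"
proof -
  define m where "m = int n - 1"
  have m2: "m \<ge> 2" using assms(1) unfolding m_def by simp
  have "(t - 1) mod m = 0" using assms(3) unfolding rr_def m_def by simp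
  then obtain q where tq: "t - 1 = m * q" by auto
  have q0: "q \<ge> 0"
  proof (rule ccontr)
    assume "\<not> q \<ge> 0"
    then have "m * q \<le> m * (-1)" using m2 by (intro mult_left_mono) auto
    then show False using tq assms(2) m2 by simp
  qed
  have t1: "t = q * m + 1" using tq by (simp add: algebra_simps)
  have ht: "hh n t = q + 1" using hh_mult[OF assms(1) q0] t1 unfolding m_def by simp
  have ht1: "hh n (t - 1) = q" using hh_mult0[OF assms(1) q0] t1 unfolding m_def by simp
  define L0 where "L0 = (\<lambda>j::nat. if j = 1 then nat (t + 1) else (0::nat))"
  have L0s: "\<forall>j. j \<noteq> 1 \<longrightarrow> L0 j = 0" unfolding L0_def by simp
  have L01: "int (L0 1) = t + 1" unfolding L0_def using assms(2) by simp
  have pL0: "pdeg L0 = t + 1" using pdeg_single[OF L0s] L01 by simp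
  have wL0: "wt L0 = t + 1" using wt_single[OF L0s] L01 by simp
  have levL0: "\<And>j. lev n j (L0, n) = t"
    unfolding lev_def WD_def using pL0 wL0 by simp
  have fin0: "finite {j. L0 j \<noteq> 0}"
    by (rule finite_subset[of _ "{1}"]) (use L0s in auto)
  have b0: "(L0, n) \<in> basis n"
    unfolding basis_def Part_def partition_def using assms(1) L0s fin0 by auto
  have in1: "(L0, n) \<in> NN n t"
  proof -
    have "-1 \<le> t" "lev n t (L0, n) \<le> t" using assms(2) levL0[of t] by simp_all
    then show ?thesis unfolding NN_def using b0 by blast
  qed
  have in2: "(L0, n) \<notin> NN n (t - 1)"
    unfolding NN_def using levL0 by force
  have uniq: "b = (L0, n)" if b1: "b \<in> NN n t" and b2: "b \<notin> NN n (t - 1)" for b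
  proof -
    obtain L k where bLk: "b = (L, k)" by fastforce
    have bb: "b \<in> basis n" using b1 unfolding NN_def by auto
    then have k: "1 \<le> k" "k \<le> n" and pL: "partition L"
      unfolding basis_def Part_def bLk by auto
    define w where "w = WD n b"
    define d where "d = pdeg L"
    have w0: "w \<ge> 0" unfolding w_def WD_def bLk using wt_pdeg_nonneg[OF pL] k by simp
    obtain j where j: "-1 \<le> j" "j \<le> t" "lev n j b \<le> j" using b1 unfolding NN_def by auto
    have nj: "\<not> (lev n i b \<le> i)" if "-1 \<le> i" "i \<le> t - 1" for i
      using b2 bb that unfolding NN_def by auto
    have jt: "j = t" using nj[of j] j by force
    have A: "(q + 1) * w + d - 1 \<le> t" using j jt ht unfolding lev_def w_def d_def bLk by simp
    have B: "\<not> (q * w + d - 1 \<le> t - 1)" using nj[of "t - 1"] ht1 assms(2)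
      unfolding lev_def w_def d_def bLk by simp
    have ww: "w = 0" using A B w0 by (simp add: algebra_simps)
    have kn: "k = n" and wp: "wt L = pdeg L"
      using ww wt_pdeg_nonneg[OF pL] k unfolding w_def WD_def bLk by simp_all
    have Ls: "\<forall>j. j \<noteq> 1 \<longrightarrow> L j = 0" using wt_eq_pdeg[OF pL wp] .
    have "d = t + 1" using A B ww by simp
    then have "int (L 1) = t + 1" using pdeg_single[OF Ls] unfolding d_def by simp
    then have "L 1 = L0 1" using L01 by linarith
    then have "L = L0"
    proof (intro ext)
      fix i show "L i = L0 i" using \<open>L 1 = L0 1\<close> Ls L0s by (cases "i = 1") auto
    qed
    then show ?thesis using bLk kn by simp
  qed
  show ?thesis unfolding LL_def L0_def[symmetric] using in1 in2 uniq by blast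
qed

end
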